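(* Let $X$ be a paracompact Hausdorff homologically locally connected topological space. Then every singular cohomology class $\xi\in H^1(X;\mathbb{R})$ is the cohomology class of some continuous closed 1-form on $X$.
   Context: $X$ is homologically locally connected if for every $x\in X$ and every neighborhood $U$ of $x$ there is a neighborhood $V\subset U$ of $x$ such that $\tilde H_q(V)\to\tilde H_q(U)$ is trivial for all $q$. A continuous closed 1-form on $X$ is a collection $\{f_U\}_{U\in\mathcal U}$ of continuous functions $f_U:U\to\mathbb{R}$, $\mathcal U$ an open cover, with $f_U-f_V$ locally constant on $U\cap V$ (up to the obvious equivalence). For a path $\gamma:[0,1]\to X$, $\int_\gamma\omega=\sum_{i}[f_{U_i}(\gamma(t_{i+1}))-f_{U_i}(\gamma(t_i))]$ for a subdivision with $\gamma[t_i,t_{i+1}]\subset U_i\in\mathcal U$. The cohomology class of $\omega$ is the element of $\mathrm{Hom}(H_1(X);\mathbb{R})=H^1(X;\mathbb{R})$ given by the homomorphism of periods $[\gamma]\mapsto\int_\gamma\omega$ on loops. *)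

theory Defs
  imports "HOL-Homology.Homology"
begin

definition paracompact_space :: "'a topology \<Rightarrow> bool" where
  "paracompact_space X \<longleftrightarrow>
     (\<forall>\<U>. (\<forall>U\<in>\<U>. openin X U) \<and> \<Union>\<U> = topspace X \<longrightarrow>
        (\<exists>\<V>. (\<forall>V\<in>\<V>. openin X V) \<and> \<Union>\<V> = topspace X \<and>
              (\<forall>V\<in>\<V>. \<exists>U\<in>\<U>. V \<subseteq> U) \<and> locally_finite_in X \<V>))"

definition nbhd_in :: "'a topology \<Rightarrow> 'a \<Rightarrow> 'a set \<Rightarrow> bool" where
  "nbhd_in X x N \<longleftrightarrow> N \<subseteq> topspace X \<and> (\<exists>W. openin X W \<and> x \<in> W \<and> W \<subseteq> N)"

definition homologically_locally_connected :: "'a topology \<Rightarrow> bool" where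
  "homologically_locally_connected X \<longleftrightarrow>
     (\<forall>x\<in>topspace X. \<forall>U. nbhd_in X x U \<longrightarrow>
        (\<exists>V. nbhd_in X x V \<and> V \<subseteq> U \<and>
          (\<forall>q::int. \<forall>c\<in>carrier (reduced_homology_group q (subtopology X V)).
              hom_induced q (subtopology X V) {} (subtopology X U) {} id c
                = \<one>\<^bsub>homology_group q (subtopology X U)\<^esub>)))"

text \<open>A continuous closed 1-form given by a family of local functions f U, U in the open cover \<U>.\<close>
definition closed_1form :: "'a topology \<Rightarrow> 'a set set \<Rightarrow> ('a set \<Rightarrow> 'a \<Rightarrow> real) \<Rightarrow> bool" where
  "closed_1form X \<U> f \<longleftrightarrow>
     (\<forall>U\<in>\<U>. openin X U) \<and> \<Union>\<U> = topspace X \<and>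
     (\<forall>U\<in>\<U>. continuous_map (subtopology X U) euclideanreal (f U)) \<and>
     (\<forall>U\<in>\<U>. \<forall>V\<in>\<U>. \<forall>x\<in>U \<inter> V. \<exists>W. openin X W \<and> x \<in> W \<and> W \<subseteq> U \<inter> V \<and>
         (\<forall>y\<in>W. f U y - f V y = f U x - f V x))"

definition admissible_subdivision ::
    "'a set set \<Rightarrow> (real \<Rightarrow> 'a) \<Rightarrow> nat \<Rightarrow> (nat \<Rightarrow> real) \<Rightarrow> (nat \<Rightarrow> 'a set) \<Rightarrow> bool" where
  "admissible_subdivision \<U> \<gamma> n t Us \<longleftrightarrow>
     t 0 = 0 \<and> t n = 1 \<and> (\<forall>i<n. t i \<le> t (Suc i)) \<and>
     (\<forall>i<n. Us i \<in> \<U> \<and> \<gamma> ` {t i..t (Suc i)} \<subseteq> Us i)"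

definition subdivision_sum ::
    "('a set \<Rightarrow> 'a \<Rightarrow> real) \<Rightarrow> (real \<Rightarrow> 'a) \<Rightarrow> nat \<Rightarrow> (nat \<Rightarrow> real) \<Rightarrow> (nat \<Rightarrow> 'a set) \<Rightarrow> real" where
  "subdivision_sum f \<gamma> n t Us = (\<Sum>i<n. f (Us i) (\<gamma> (t (Suc i))) - f (Us i) (\<gamma> (t i)))"

definition form_integral_is ::
    "'a set set \<Rightarrow> ('a set \<Rightarrow> 'a \<Rightarrow> real) \<Rightarrow> (real \<Rightarrow> 'a) \<Rightarrow> real \<Rightarrow> bool" where
  "form_integral_is \<U> f \<gamma> r \<longleftrightarrow>
     (\<exists>n t Us. admissible_subdivision \<U> \<gamma> n t Us) \<and>
     (\<forall>n t Us. admissible_subdivision \<U> \<gamma> n t Us \<longrightarrow> subdivision_sum f \<gamma> n t Us = r)"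

text \<open>The singular 1-simplex of a path (parameter t = x 1 on the standard 1-simplex) and the
  homology class in H_1(X) of a loop.\<close>
definition path_simplex :: "(real \<Rightarrow> 'a) \<Rightarrow> (nat \<Rightarrow> real) \<Rightarrow> 'a" where
  "path_simplex \<gamma> = restrict (\<lambda>x. \<gamma> (x 1)) (standard_simplex 1)"

definition loop_class :: "'a topology \<Rightarrow> (real \<Rightarrow> 'a) \<Rightarrow> 'a chain set" where
  "loop_class X \<gamma> = homologous_rel_set 1 X {} (frag_of (path_simplex \<gamma>))"

text \<open>The additive group of the reals, so that H^1(X;R) = Hom(H_1(X), R).\<close>
definition real_add_group :: "real monoid" where
  "real_add_group = \<lparr>carrier = UNIV, monoid.mult = (+), one = 0\<rparr>"

end

theory Submission
  imports Defs "HOL-Analysis.Urysohn"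
begin


lemma continuous_map_local_real:
  assumes "\<And>x. x \<in> topspace X \<Longrightarrow> \<exists>N g. openin X N \<and> x \<in> N \<and> continuous_map X euclideanreal g \<and> (\<forall>y\<in>N. f y = g y)"
  shows "continuous_map X euclideanreal f"
proof -
  have "openin X {x \<in> topspace X. f x \<in> U}" if "open U" for U
  proof (subst openin_subopen, intro ballI)
    fix x assume x: "x \<in> {x \<in> topspace X. f x \<in> U}"
    then obtain N g where N: "openin X N" "x \<in> N" "continuous_map X euclideanreal g" "\<forall>y\<in>N. f y = g y"
      using assms by blast
    show "\<exists>T. openin X T \<and> x \<in> T \<and> T \<subseteq> {x \<in> topspace X. f x \<in> U}"
    proof (intro exI conjI)
      show "openin X (N \<inter> {y \<in> topspace X. g y \<in> U})"
        using N that by (intro openin_Int openin_continuous_map_preimage) auto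
      show "x \<in> N \<inter> {y \<in> topspace X. g y \<in> U}" using x N by auto
      show "N \<inter> {y \<in> topspace X. g y \<in> U} \<subseteq> {x \<in> topspace X. f x \<in> U}" using N by auto
    qed
  qed
  then show ?thesis by (simp add: continuous_map_def)
qed


lemma paracompactD:
  assumes "paracompact_space X" "\<forall>U\<in>\<U>. openin X U" "\<Union>\<U> = topspace X"
  obtains \<V> where "\<forall>V\<in>\<V>. openin X V" "\<Union>\<V> = topspace X" "\<forall>V\<in>\<V>. \<exists>U\<in>\<U>. V \<subseteq> U" "locally_finite_in X \<V>"
proof -
  have "(\<forall>U\<in>\<U>. openin X U) \<and> \<Union>\<U> = topspace X" using assms(2,3) by blast
  with assms(1)[unfolded paracompact_space_def, THEN spec[where x=\<U>]]
  have "\<exists>\<V>. (\<forall>V\<in>\<V>. openin X V) \<and> \<Union>\<V> = topspace X \<and> (\<forall>V\<in>\<V>. \<exists>U\<in>\<U>. V \<subseteq> U) \<and> locally_finite_in X \<V>"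
    by (rule mp)
  then show ?thesis using that by blast
qed

lemma para_sep:
  assumes P: "paracompact_space X" and A: "closedin X A" and B: "B \<subseteq> topspace X"
    and sep: "\<And>a. a \<in> A \<Longrightarrow> \<exists>U V. openin X U \<and> openin X V \<and> a \<in> U \<and> B \<subseteq> V \<and> disjnt U V"
  shows "\<exists>U V. openin X U \<and> openin X V \<and> A \<subseteq> U \<and> B \<subseteq> V \<and> disjnt U V"
proof -
  have "\<forall>a\<in>A. \<exists>U V. openin X U \<and> openin X V \<and> a \<in> U \<and> B \<subseteq> V \<and> disjnt U V"
    using sep by blast
  from bchoice[OF this] obtain U where "\<forall>a\<in>A. \<exists>V. openin X (U a) \<and> openin X V \<and> a \<in> U a \<and> B \<subseteq> V \<and> disjnt (U a) V"
    by blast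
  from bchoice[OF this] obtain V where UV0: "\<forall>a\<in>A. openin X (U a) \<and> openin X (V a) \<and> a \<in> U a \<and> B \<subseteq> V a \<and> disjnt (U a) (V a)"
    by blast
  then have UV: "\<And>a. a \<in> A \<Longrightarrow> openin X (U a) \<and> openin X (V a) \<and> a \<in> U a \<and> B \<subseteq> V a \<and> disjnt (U a) (V a)"
    by blast
  define \<U> where "\<U> = insert (topspace X - A) (U ` A)"
  have U1: "\<forall>W\<in>\<U>. openin X W" using UV A by (auto simp: \<U>_def)
  have U2: "\<Union>\<U> = topspace X"
  proof -
    have "U a \<subseteq> topspace X" if "a \<in> A" for a using UV[OF that] openin_subset by blast
    then show ?thesis using UV by (auto simp: \<U>_def)
  qed
  obtain \<V> where \<V>: "\<forall>V\<in>\<V>. openin X V" "\<Union>\<V> = topspace X" "\<forall>V\<in>\<V>. \<exists>W\<in>\<U>. V \<subseteq> W" "locally_finite_in X \<V>"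
    by (rule paracompactD[OF P U1 U2])
  define \<W> where "\<W> = {W\<in>\<V>. W \<inter> A \<noteq> {}}"
  have lf: "locally_finite_in X \<W>" using locally_finite_in_subset[OF \<V>(4)] by (auto simp: \<W>_def)
  have cl: "X closure_of \<Union>\<W> = \<Union>((\<lambda>S. X closure_of S) ` \<W>)" by (rule closure_of_locally_finite_Union[OF lf])
  have BW: "B \<inter> X closure_of W = {}" if "W \<in> \<W>" for W
  proof -
    from that have W: "W \<in> \<V>" "W \<inter> A \<noteq> {}" by (auto simp: \<W>_def)
    then obtain Z where Z: "Z\<in>\<U>" "W \<subseteq> Z" "W \<inter> A \<noteq> {}" using \<V>(3) by blast
    then obtain a where a: "a \<in> A" "W \<subseteq> U a" by (auto simp: \<U>_def)
    then have "X closure_of W \<subseteq> X closure_of U a" by (simp add: closure_of_mono)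
    moreover have "V a \<inter> X closure_of (U a) = {}"
      using UV[OF a(1)] openin_Int_closure_of_eq_empty[of X "V a" "U a"] by (simp add: disjnt_def inf_commute)
    ultimately show ?thesis using UV[OF a(1)] by blast
  qed
  show ?thesis
  proof (intro exI conjI)
    show "openin X (\<Union>\<W>)" using \<V>(1) by (auto simp: \<W>_def)
    show "openin X (topspace X - X closure_of \<Union>\<W>)" by (simp add: openin_diff)
    show "A \<subseteq> \<Union>\<W>"
    proof
      fix x assume x: "x \<in> A"
      then have "x \<in> \<Union>\<V>" using \<V>(2) closedin_subset[OF A] by auto
      then obtain W where "W \<in> \<V>" "x \<in> W" by blast
      then show "x \<in> \<Union>\<W>" using x unfolding \<W>_def by blast
    qed
    show "B \<subseteq> topspace X - X closure_of \<Union>\<W>" using B BW cl by auto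
    have "\<Union>\<W> \<subseteq> topspace X" using \<V>(2) by (auto simp: \<W>_def)
    then show "disjnt (\<Union>\<W>) (topspace X - X closure_of \<Union>\<W>)"
      using closure_of_subset[of "\<Union>\<W>" X] by (auto simp: disjnt_def)
  qed
qed

lemma para_regular:
  assumes P: "paracompact_space X" and H: "Hausdorff_space X"
  shows "regular_space X"
  unfolding regular_space_def
proof (intro allI impI)
  fix C a assume Ca: "closedin X C \<and> a \<in> topspace X - C"
  have "\<exists>U V. openin X U \<and> openin X V \<and> C \<subseteq> U \<and> {a} \<subseteq> V \<and> disjnt U V"
  proof (rule para_sep[OF P])
    show "closedin X C" "{a} \<subseteq> topspace X" using Ca by auto
    fix c assume "c \<in> C"
    then have "c \<in> topspace X" "c \<noteq> a" using Ca closedin_subset by auto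
    then show "\<exists>U V. openin X U \<and> openin X V \<and> c \<in> U \<and> {a} \<subseteq> V \<and> disjnt U V"
      using H Ca unfolding Hausdorff_space_def by auto
  qed
  then show "\<exists>U V. openin X U \<and> openin X V \<and> a \<in> U \<and> C \<subseteq> V \<and> disjnt U V"
    by (meson disjnt_sym insert_subset)
qed

lemma para_normal:
  assumes P: "paracompact_space X" and H: "Hausdorff_space X"
  shows "normal_space X"
  unfolding normal_space_def
proof (intro allI impI)
  fix S T assume ST: "closedin X S \<and> closedin X T \<and> disjnt S T"
  have R: "regular_space X" using para_regular[OF P H] .
  show "\<exists>U V. openin X U \<and> openin X V \<and> S \<subseteq> U \<and> T \<subseteq> V \<and> disjnt U V"
  proof (rule para_sep[OF P])
    show "closedin X S" "T \<subseteq> topspace X" using ST closedin_subset by auto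
    fix s assume "s \<in> S"
    then have "s \<in> topspace X - T" using ST closedin_subset by (auto simp: disjnt_def)
    then show "\<exists>U V. openin X U \<and> openin X V \<and> s \<in> U \<and> T \<subseteq> V \<and> disjnt U V"
      using R ST unfolding regular_space_def by blast
  qed
qed

lemma lf_finite_point:
  assumes "locally_finite_in X \<V>" "x \<in> topspace X"
  shows "finite {V\<in>\<V>. x \<in> V}"
proof -
  obtain N where "openin X N" "x \<in> N" "finite {U \<in> \<V>. U \<inter> N \<noteq> {}}"
    using assms unfolding locally_finite_in_def by blast
  then show ?thesis by (rule_tac finite_subset[of _ "{U \<in> \<V>. U \<inter> N \<noteq> {}}"]) auto
qed

lemma partition_of_unity:
  assumes P: "paracompact_space X" and H: "Hausdorff_space X"
    and op: "\<And>V. V \<in> \<V> \<Longrightarrow> openin X V" and cov: "\<Union>\<V> = topspace X" and lf: "locally_finite_in X \<V>"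
  obtains \<phi> where "\<And>V. V\<in>\<V> \<Longrightarrow> continuous_map X euclideanreal (\<phi> V)"
    "\<And>V x. V\<in>\<V> \<Longrightarrow> x \<in> topspace X - V \<Longrightarrow> \<exists>N. openin X N \<and> x \<in> N \<and> (\<forall>y\<in>N. \<phi> V y = 0)"
    "\<And>x. x \<in> topspace X \<Longrightarrow> (\<Sum>V\<in>{V\<in>\<V>. x\<in>V}. \<phi> V x) = 1"
proof -
  have R: "regular_space X" and NS: "normal_space X" using para_regular[OF P H] para_normal[OF P H] by auto
  have "\<forall>x\<in>topspace X. \<exists>W V. openin X W \<and> x \<in> W \<and> V \<in> \<V> \<and> X closure_of W \<subseteq> V"
  proof
    fix x assume x: "x \<in> topspace X"
    then obtain V where V: "V \<in> \<V>" "x \<in> V" using cov by auto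
    have "closedin X (topspace X - V)" using op[OF V(1)] by blast
    then obtain W where "openin X W" "x \<in> W" "disjnt (topspace X - V) (X closure_of W)"
      using R x V unfolding regular_space by blast
    then have "X closure_of W \<subseteq> V" using closure_of_subset_topspace by (fastforce simp: disjnt_def)
    then show "\<exists>W V. openin X W \<and> x \<in> W \<and> V \<in> \<V> \<and> X closure_of W \<subseteq> V"
      using V \<open>openin X W\<close> \<open>x \<in> W\<close> by blast
  qed
  from bchoice[OF this] obtain Wx where "\<forall>x\<in>topspace X. \<exists>V. openin X (Wx x) \<and> x \<in> Wx x \<and> V \<in> \<V> \<and> X closure_of (Wx x) \<subseteq> V"
    by blast
  from bchoice[OF this] obtain Vx where WV0: "\<forall>x\<in>topspace X. openin X (Wx x) \<and> x \<in> Wx x \<and> Vx x \<in> \<V> \<and> X closure_of (Wx x) \<subseteq> Vx x"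
    by blast
  then have WV: "\<And>x. x \<in> topspace X \<Longrightarrow> openin X (Wx x) \<and> x \<in> Wx x \<and> Vx x \<in> \<V> \<and> X closure_of (Wx x) \<subseteq> Vx x"
    by blast
  have W1: "\<forall>W\<in>Wx ` topspace X. openin X W" using WV by auto
  have W2: "\<Union>(Wx ` topspace X) = topspace X"
  proof -
    have "Wx x \<subseteq> topspace X" if "x \<in> topspace X" for x using WV[OF that] openin_subset by blast
    then show ?thesis using WV by blast
  qed
  obtain \<W> where \<W>: "\<forall>V\<in>\<W>. openin X V" "\<Union>\<W> = topspace X" "\<forall>V\<in>\<W>. \<exists>W\<in>Wx ` topspace X. V \<subseteq> W" "locally_finite_in X \<W>"
    by (rule paracompactD[OF P W1 W2])
  have "\<forall>W\<in>\<W>. \<exists>V. V \<in> \<V> \<and> X closure_of W \<subseteq> V"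
  proof
    fix W assume "W \<in> \<W>"
    then obtain x where x: "x \<in> topspace X" "W \<subseteq> Wx x" using \<W> by auto
    then have "X closure_of W \<subseteq> Vx x" using WV[OF x(1)] closure_of_mono by blast
    then show "\<exists>V. V \<in> \<V> \<and> X closure_of W \<subseteq> V" using WV[OF x(1)] by blast
  qed
  from bchoice[OF this] obtain a where a0: "\<forall>W\<in>\<W>. a W \<in> \<V> \<and> X closure_of W \<subseteq> a W" by blast
  then have a: "\<And>W. W \<in> \<W> \<Longrightarrow> a W \<in> \<V> \<and> X closure_of W \<subseteq> a W" by blast
  define C where "C V = X closure_of \<Union>{W\<in>\<W>. a W = V}" for V
  have CV: "C V \<subseteq> V" for V
  proof -
    have "locally_finite_in X {W\<in>\<W>. a W = V}" using locally_finite_in_subset \<W>(4) by fastforce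
    then have "C V = \<Union>((\<lambda>S. X closure_of S) ` {W\<in>\<W>. a W = V})"
      unfolding C_def by (rule closure_of_locally_finite_Union)
    then show ?thesis using a by auto
  qed
  have Ccl: "closedin X (C V)" for V unfolding C_def by simp
  have Ccov: "\<exists>V\<in>\<V>. x \<in> C V" if xt: "x \<in> topspace X" for x
  proof -
    have "x \<in> \<Union>\<W>" using \<W>(2) xt by auto
    then obtain W where W: "W \<in> \<W>" "x \<in> W" by blast
    have "\<Union>{W'\<in>\<W>. a W' = a W} \<subseteq> topspace X" using \<W>(2) by auto
    then have "x \<in> C (a W)" unfolding C_def using W closure_of_subset by fastforce
    then show ?thesis using a W by blast
  qed
  have "\<forall>V\<in>\<V>. \<exists>D. openin X D \<and> C V \<subseteq> D \<and> X closure_of D \<subseteq> V"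
  proof
    fix V assume V: "V \<in> \<V>"
    show "\<exists>D. openin X D \<and> C V \<subseteq> D \<and> X closure_of D \<subseteq> V"
      by (rule NS[unfolded normal_space_alt, rule_format]) (use Ccl CV op[OF V] in auto)
  qed
  from bchoice[OF this] obtain D where D0: "\<forall>V\<in>\<V>. openin X (D V) \<and> C V \<subseteq> D V \<and> X closure_of (D V) \<subseteq> V"
    by blast
  then have D: "\<And>V. V \<in> \<V> \<Longrightarrow> openin X (D V) \<and> C V \<subseteq> D V \<and> X closure_of (D V) \<subseteq> V" by blast
  have "\<forall>V\<in>\<V>. \<exists>f. continuous_map X (top_of_set {0..1::real}) f \<and> f ` (topspace X - D V) \<subseteq> {0} \<and> f ` (C V) \<subseteq> {1}"
  proof
    fix V assume V: "V \<in> \<V>"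
    show "\<exists>f. continuous_map X (top_of_set {0..1::real}) f \<and> f ` (topspace X - D V) \<subseteq> {0} \<and> f ` (C V) \<subseteq> {1}"
    proof -
      have c1: "closedin X (topspace X - D V)" using D[OF V] by (simp add: closedin_diff)
      have d1: "disjnt (topspace X - D V) (C V)" using D[OF V] by (auto simp: disjnt_def)
      obtain f where "continuous_map X (top_of_set {0..1::real}) f" "f ` (topspace X - D V) \<subseteq> {0}" "f ` (C V) \<subseteq> {1}"
        by (rule Urysohn_lemma[OF NS c1 Ccl d1, of 0 1]) auto
      then show ?thesis by blast
    qed
  qed
  from bchoice[OF this] obtain \<psi> where \<psi>0: "\<forall>V\<in>\<V>. continuous_map X (top_of_set {0..1::real}) (\<psi> V) \<and> \<psi> V ` (topspace X - D V) \<subseteq> {0} \<and> \<psi> V ` (C V) \<subseteq> {1}"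
    by blast
  then have \<psi>: "\<And>V. V \<in> \<V> \<Longrightarrow> continuous_map X (top_of_set {0..1::real}) (\<psi> V) \<and> \<psi> V ` (topspace X - D V) \<subseteq> {0} \<and> \<psi> V ` (C V) \<subseteq> {1}"
    by blast
  have \<psi>c: "continuous_map X euclideanreal (\<psi> V)" if "V \<in> \<V>" for V
    using \<psi>[OF that] by (simp add: continuous_map_in_subtopology)
  have \<psi>01: "0 \<le> \<psi> V x" if "V \<in> \<V>" "x \<in> topspace X" for V x
    using \<psi>[OF that(1)] that(2) unfolding continuous_map_def by (auto simp: Pi_iff)
  have \<psi>0: "\<psi> V y = 0" if "V \<in> \<V>" "y \<in> topspace X" "y \<notin> V" for V y
  proof -
    have "y \<notin> D V" using D[OF that(1)] closure_of_subset[of "D V" X] openin_subset[of X "D V"] that by auto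
    then show ?thesis using \<psi>[OF that(1)] that(2) by auto
  qed
  define \<sigma> where "\<sigma> x = (\<Sum>V\<in>{V\<in>\<V>. x\<in>V}. \<psi> V x)" for x
  have \<sigma>pos: "\<sigma> x \<ge> 1" if x: "x \<in> topspace X" for x
  proof -
    obtain V0 where V0: "V0 \<in> \<V>" "x \<in> C V0" using Ccov[OF x] by blast
    then have "x \<in> V0" using CV by auto
    have "\<psi> V0 x = 1" using \<psi>[OF V0(1)] V0(2) by auto
    moreover have "\<psi> V0 x \<le> \<sigma> x" unfolding \<sigma>_def
      by (rule member_le_sum) (use \<open>x \<in> V0\<close> V0 lf_finite_point[OF lf x] \<psi>01 x in auto)
    ultimately show ?thesis by simp
  qed
  have \<sigma>c: "continuous_map X euclideanreal \<sigma>"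
  proof (rule continuous_map_local_real)
    fix x assume x: "x \<in> topspace X"
    obtain N where N: "openin X N" "x \<in> N" "finite {U \<in> \<V>. U \<inter> N \<noteq> {}}"
      using lf x unfolding locally_finite_in_def by blast
    define F where "F = {U \<in> \<V>. U \<inter> N \<noteq> {}}"
    show "\<exists>N g. openin X N \<and> x \<in> N \<and> continuous_map X euclideanreal g \<and> (\<forall>y\<in>N. \<sigma> y = g y)"
    proof (intro exI conjI ballI)
      show "openin X N" "x \<in> N" by fact+
      show "continuous_map X euclideanreal (\<lambda>y. \<Sum>V\<in>F. \<psi> V y)"
        using N(3) \<psi>c by (intro continuous_map_sum) (auto simp: F_def)
      fix y assume y: "y \<in> N"
      have yt: "y \<in> topspace X" using y N openin_subset by auto
      show "\<sigma> y = (\<Sum>V\<in>F. \<psi> V y)" unfolding \<sigma>_def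
        by (rule sum.mono_neutral_left) (use N(3) y yt \<psi>0 in \<open>auto simp: F_def\<close>)
    qed
  qed
  show ?thesis
  proof
    fix V assume V: "V \<in> \<V>"
    show "continuous_map X euclideanreal (\<lambda>x. \<psi> V x / \<sigma> x)"
      using \<psi>c[OF V] \<sigma>c \<sigma>pos by (intro continuous_map_real_divide) force+
  next
    fix V x assume V: "V \<in> \<V>" and x: "x \<in> topspace X - V"
    show "\<exists>N. openin X N \<and> x \<in> N \<and> (\<forall>y\<in>N. \<psi> V y / \<sigma> y = 0)"
    proof (intro exI conjI ballI)
      show "openin X (topspace X - X closure_of (D V))" by (simp add: openin_diff)
      show "x \<in> topspace X - X closure_of (D V)" using x D[OF V] by auto
      fix y assume y: "y \<in> topspace X - X closure_of (D V)"
      then have "y \<notin> D V" using closure_of_subset[of "D V" X] openin_subset[of X "D V"] D[OF V] by auto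
      then show "\<psi> V y / \<sigma> y = 0" using \<psi>[OF V] y by auto
    qed
  next
    fix x assume x: "x \<in> topspace X"
    have "(\<Sum>V\<in>{V\<in>\<V>. x\<in>V}. \<psi> V x / \<sigma> x) = (\<Sum>V\<in>{V\<in>\<V>. x\<in>V}. \<psi> V x) / \<sigma> x"
      by (rule sum_divide_distrib[symmetric])
    also have "\<dots> = \<sigma> x / \<sigma> x" by (simp add: \<sigma>_def)
    finally show "(\<Sum>V\<in>{V\<in>\<V>. x\<in>V}. \<psi> V x / \<sigma> x) = 1" using \<sigma>pos[OF x] by simp
  qed
qed



definition hpt :: "'a \<Rightarrow> (nat \<Rightarrow> real) \<Rightarrow> 'a" where
  "hpt y = restrict (\<lambda>_. y) (standard_simplex 0)"

definition hseg :: "(real \<Rightarrow> 'a) \<Rightarrow> real \<Rightarrow> real \<Rightarrow> (nat \<Rightarrow> real) \<Rightarrow> 'a" where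
  "hseg g a b = restrict (\<lambda>x. g (a * x 0 + b * x 1)) (standard_simplex 1)"

definition htri :: "(real \<Rightarrow> 'a) \<Rightarrow> real \<Rightarrow> real \<Rightarrow> real \<Rightarrow> (nat \<Rightarrow> real) \<Rightarrow> 'a" where
  "htri g a b c = restrict (\<lambda>x. g (a * x 0 + b * x 1 + c * x 2)) (standard_simplex 2)"

lemma std1_mem:
  assumes "x \<in> standard_simplex 1"
  shows "0 \<le> x 0" "0 \<le> x 1" "x 0 + x 1 = 1"
  using assms by (auto simp: standard_simplex_def atMost_Suc)

lemma std2_mem:
  assumes "x \<in> standard_simplex 2"
  shows "0 \<le> x 0" "0 \<le> x 1" "0 \<le> x 2" "x 0 + x 1 + x 2 = 1"
  using assms by (auto simp: standard_simplex_def atMost_Suc numeral_2_eq_2)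

lemma convex2_bound:
  fixes a b u v :: real
  assumes "0 \<le> u" "0 \<le> v" "u + v = 1" "a \<le> b"
  shows "a \<le> a * u + b * v" "a * u + b * v \<le> b"
proof -
  have u: "u = 1 - v" using assms(3) by simp
  have "a * u + b * v = a + (b - a) * v" by (simp add: u algebra_simps)
  moreover have "v \<le> 1" using assms by linarith
  moreover have "(b - a) * v \<ge> 0" using assms by simp
  moreover have "(b - a) * v \<le> (b - a)" using assms \<open>v \<le> 1\<close> by (simp add: mult_left_le)
  ultimately show "a \<le> a * u + b * v" "a * u + b * v \<le> b" by linarith+
qed

lemma convex3_bound:
  fixes a b c u v w :: real
  assumes "0 \<le> u" "0 \<le> v" "0 \<le> w" "u + v + w = 1" "a \<le> b" "b \<le> c"
  shows "a \<le> a * u + b * v + c * w" "a * u + b * v + c * w \<le> c"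
proof -
  have u: "u = 1 - v - w" using assms(4) by simp
  have e: "a * u + b * v + c * w = a + (b - a) * v + (c - a) * w"
    by (simp add: u algebra_simps)
  have "(b - a) * v \<ge> 0" "(c - a) * w \<ge> 0" using assms by simp_all
  then show "a \<le> a * u + b * v + c * w" using e by linarith
  have w: "w = 1 - u - v" using assms(4) by simp
  have e2: "a * u + b * v + c * w = c - (c - a) * u - (c - b) * v"
    by (simp add: w algebra_simps)
  have "(c - a) * u \<ge> 0" "(c - b) * v \<ge> 0" using assms by simp_all
  then show "a * u + b * v + c * w \<le> c" using e2 by linarith
qed

lemma cont_lin_std:
  fixes p :: nat
  shows "continuous_map (subtopology (powertop_real UNIV) (standard_simplex p)) euclideanreal (\<lambda>x. \<Sum>i\<le>p. e i * x i)"
  by (intro continuous_map_sum continuous_map_real_mult continuous_map_from_subtopology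
        continuous_map_product_projection[of _ UNIV "\<lambda>_. euclideanreal", simplified]) auto

lemma hpt_simplex:
  assumes "y \<in> topspace X"
  shows "singular_simplex 0 X (hpt y)"
  unfolding singular_simplex_def hpt_def
proof
  show "continuous_map (subtopology (powertop_real UNIV) (standard_simplex 0)) X (\<lambda>x\<in>standard_simplex 0. y)"
    by (rule continuous_map_eq[of _ _ "\<lambda>_. y"]) (use assms in auto)
qed simp

lemma hseg_simplex:
  assumes "pathin X g" "0 \<le> a" "a \<le> b" "b \<le> 1" "g ` {a..b} \<subseteq> S"
  shows "singular_simplex 1 (subtopology X S) (hseg g a b)"
  unfolding singular_simplex_def hseg_def
proof
  let ?L = "\<lambda>x::nat\<Rightarrow>real. a * x 0 + b * x 1"
  have L: "?L x \<in> {a..b}" if "x \<in> standard_simplex 1" for x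
    using convex2_bound[OF std1_mem[OF that] \<open>a \<le> b\<close>] by auto
  have "continuous_map (subtopology (powertop_real UNIV) (standard_simplex 1)) euclideanreal (\<lambda>x. \<Sum>i\<le>1. (\<lambda>i. if i = 0 then a else b) i * x i)"
    by (rule cont_lin_std)
  then have c1: "continuous_map (subtopology (powertop_real UNIV) (standard_simplex 1)) euclideanreal ?L"
    by (simp add: atMost_Suc add_ac)
  have L01: "?L x \<in> {0..1}" if "x \<in> standard_simplex 1" for x
  proof -
    have "a \<le> ?L x" "?L x \<le> b" using L[OF that] by (simp_all only: atLeastAtMost_iff)
    then show ?thesis using assms by (simp only: atLeastAtMost_iff) linarith
  qed
  have c2: "continuous_map (subtopology (powertop_real UNIV) (standard_simplex 1)) (subtopology euclideanreal {0..1}) ?L"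
    using c1 L01 by (auto simp: continuous_map_in_subtopology)
  have c3: "continuous_map (subtopology (powertop_real UNIV) (standard_simplex 1)) X (g \<circ> ?L)"
    using continuous_map_compose[OF c2] assms(1) unfolding pathin_def by blast
  have c4: "continuous_map (subtopology (powertop_real UNIV) (standard_simplex 1)) (subtopology X S) (g \<circ> ?L)"
    using c3 L assms(5) by (auto simp: continuous_map_in_subtopology)
  show "continuous_map (subtopology (powertop_real UNIV) (standard_simplex 1)) (subtopology X S) (\<lambda>x\<in>standard_simplex 1. g (a * x 0 + b * x 1))"
    by (rule continuous_map_eq[OF c4]) auto
qed simp

lemma htri_simplex:
  assumes "pathin X g" "0 \<le> a" "a \<le> b" "b \<le> c" "c \<le> 1" "g ` {a..c} \<subseteq> S"
  shows "singular_simplex 2 (subtopology X S) (htri g a b c)"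
  unfolding singular_simplex_def htri_def
proof
  let ?L = "\<lambda>x::nat\<Rightarrow>real. a * x 0 + b * x 1 + c * x 2"
  have L: "?L x \<in> {a..c}" if "x \<in> standard_simplex 2" for x
    using convex3_bound[OF std2_mem[OF that] \<open>a \<le> b\<close> \<open>b \<le> c\<close>] by auto
  have "continuous_map (subtopology (powertop_real UNIV) (standard_simplex 2)) euclideanreal (\<lambda>x. \<Sum>i\<le>2. (\<lambda>i. if i = 0 then a else if i = 1 then b else c) i * x i)"
    by (rule cont_lin_std)
  then have c1: "continuous_map (subtopology (powertop_real UNIV) (standard_simplex 2)) euclideanreal ?L"
    by (simp add: atMost_Suc numeral_2_eq_2 add_ac)
  have L01: "?L x \<in> {0..1}" if "x \<in> standard_simplex 2" for x
  proof -
    have "a \<le> ?L x" "?L x \<le> c" using L[OF that] by (simp_all only: atLeastAtMost_iff)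
    then show ?thesis using assms by (simp only: atLeastAtMost_iff) linarith
  qed
  have c2: "continuous_map (subtopology (powertop_real UNIV) (standard_simplex 2)) (subtopology euclideanreal {0..1}) ?L"
    using c1 L01 by (auto simp: continuous_map_in_subtopology)
  have c3: "continuous_map (subtopology (powertop_real UNIV) (standard_simplex 2)) X (g \<circ> ?L)"
    using continuous_map_compose[OF c2] assms(1) unfolding pathin_def by blast
  have c4: "continuous_map (subtopology (powertop_real UNIV) (standard_simplex 2)) (subtopology X S) (g \<circ> ?L)"
    using c3 L assms(6) by (auto simp: continuous_map_in_subtopology)
  show "continuous_map (subtopology (powertop_real UNIV) (standard_simplex 2)) (subtopology X S) (\<lambda>x\<in>standard_simplex 2. g (a * x 0 + b * x 1 + c * x 2))"
    by (rule continuous_map_eq[OF c4]) auto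
qed simp

lemma chain_boundary_1_of:
  "chain_boundary 1 (frag_of f) = frag_of (singular_face 1 0 f) - frag_of (singular_face 1 1 f)"
  by (simp add: chain_boundary_of atMost_Suc)

lemma chain_boundary_2_of:
  "chain_boundary 2 (frag_of f) = frag_of (singular_face 2 0 f) - frag_of (singular_face 2 1 f) + frag_of (singular_face 2 2 f)"
  by (simp add: chain_boundary_of atMost_Suc numeral_2_eq_2)

lemma std0_eq: "x \<in> standard_simplex 0 \<longleftrightarrow> x = (\<lambda>j. if j = 0 then 1 else 0)"
  by (simp add: standard_simplex_0)

lemma hseg_face0: "singular_face 1 0 (hseg g a b) = hpt (g b)"
proof
  fix x
  show "singular_face 1 0 (hseg g a b) x = hpt (g b) x"
  proof (cases "x \<in> standard_simplex 0")
    case True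
    then have x: "x = (\<lambda>j. if j = 0 then 1 else 0)" by (simp add: std0_eq)
    have "simplical_face 0 x \<in> standard_simplex 1"
      using simplical_face_in_standard_simplex[of 1 0 x] True by simp
    then show ?thesis using True
      by (simp add: singular_face_def hseg_def hpt_def x simplical_face_def)
  next
    case False
    then show ?thesis by (simp add: singular_face_def hpt_def)
  qed
qed

lemma hseg_face1: "singular_face 1 1 (hseg g a b) = hpt (g a)"
proof
  fix x
  show "singular_face 1 1 (hseg g a b) x = hpt (g a) x"
  proof (cases "x \<in> standard_simplex 0")
    case True
    then have x: "x = (\<lambda>j. if j = 0 then 1 else 0)" by (simp add: std0_eq)
    have "simplical_face 1 x \<in> standard_simplex 1"
      using simplical_face_in_standard_simplex[of 1 1 x] True by simp
    then show ?thesis using True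
      by (simp add: singular_face_def hseg_def hpt_def x simplical_face_def)
  next
    case False
    then show ?thesis by (simp add: singular_face_def hpt_def)
  qed
qed

lemma hseg_boundary:
  "chain_boundary 1 (frag_of (hseg g a b)) = frag_of (hpt (g b)) - frag_of (hpt (g a))"
  unfolding chain_boundary_1_of hseg_face0 hseg_face1 by (rule refl)

lemma htri_face:
  assumes "k \<le> 2"
  shows "singular_face 2 k (htri g a b c) =
     (if k = 0 then hseg g b c else if k = 1 then hseg g a c else hseg g a b)"
proof
  fix x
  show "singular_face 2 k (htri g a b c) x = (if k = 0 then hseg g b c else if k = 1 then hseg g a c else hseg g a b) x"
  proof (cases "x \<in> standard_simplex 1")
    case True
    have "simplical_face k x \<in> standard_simplex 2"
      using simplical_face_in_standard_simplex[of 2 k x] True assms by simp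
    then show ?thesis using True assms
      by (auto simp: singular_face_def hseg_def htri_def simplical_face_def)
  next
    case False
    then show ?thesis by (simp add: singular_face_def hseg_def)
  qed
qed

lemma htri_boundary:
  "chain_boundary 2 (frag_of (htri g a b c)) = frag_of (hseg g b c) - frag_of (hseg g a c) + frag_of (hseg g a b)"
  unfolding chain_boundary_2_of by (simp add: htri_face)



lemma homology1_carrier:
  "singular_relcycle 1 X {} a \<Longrightarrow> homologous_rel_set 1 X {} a \<in> carrier (homology_group 1 X)"
  using carrier_relative_homology_group[of 1 X "{}"] by simp

lemma homology1_one:
  "one (homology_group 1 X) = singular_relboundary_set 1 X {}"
  using one_relative_homology_group[of 1 X "{}"] by simp

lemma homology1_mult:
  assumes "singular_relcycle 1 X {} a" "singular_relcycle 1 X {} b"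
  shows "homologous_rel_set 1 X {} a \<otimes>\<^bsub>homology_group 1 X\<^esub> homologous_rel_set 1 X {} b
       = homologous_rel_set 1 X {} (a + b)"
proof -
  have m: "(\<otimes>\<^bsub>homology_group 1 X\<^esub>) = (\<lambda>R S. (\<Union>r\<in>R. \<Union>s\<in>S. {r + s}))"
    using mult_relative_homology_group[of 1 X "{}"] by simp
  show ?thesis
  proof (simp only: m, intro equalityI subsetI)
    fix x assume "x \<in> (\<Union>r\<in>homologous_rel_set 1 X {} a. \<Union>s\<in>homologous_rel_set 1 X {} b. {r + s})"
    then obtain r s where "homologous_rel 1 X {} a r" "homologous_rel 1 X {} b s" "x = r + s" by auto
    then show "x \<in> homologous_rel_set 1 X {} (a + b)" by (simp add: homologous_rel_add)
  next
    fix x assume x: "x \<in> homologous_rel_set 1 X {} (a + b)"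
    have "homologous_rel 1 X {} a (x - b)"
      using x by (simp add: homologous_rel_def algebra_simps)
    then show "x \<in> (\<Union>r\<in>homologous_rel_set 1 X {} a. \<Union>s\<in>homologous_rel_set 1 X {} b. {r + s})"
      by (auto intro!: bexI[of _ "x - b"] bexI[of _ b])
  qed
qed

definition trivS :: "'a topology \<Rightarrow> 'a set \<Rightarrow> bool" where
  "trivS X W \<longleftrightarrow> (\<forall>z. singular_chain 1 (subtopology X W) z \<and> chain_boundary 1 z = 0 \<longrightarrow> singular_relboundary 1 X {} z)"

definition connS :: "'a topology \<Rightarrow> 'a set \<Rightarrow> 'a set \<Rightarrow> bool" where
  "connS X V U \<longleftrightarrow> (\<forall>y\<in>V. \<forall>z\<in>V. \<exists>d. singular_chain 1 (subtopology X U) d \<and> chain_boundary 1 d = frag_of (hpt z) - frag_of (hpt y))"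

locale xi_setup =
  fixes X :: "'a topology" and \<xi> :: "'a chain set \<Rightarrow> real"
  assumes xi_hom: "\<xi> \<in> hom (homology_group 1 X) real_add_group"
begin

definition Rel where "Rel s t \<longleftrightarrow> homologous_rel 0 X {} (frag_of s) (frag_of t)"
definition pp where "pp s = (SOME t. Rel s t)"
definition b0 where "b0 s = (SOME d. singular_chain 1 X d \<and> chain_boundary 1 d = frag_of s - frag_of (pp s))"
definition BB where "BB c = frag_extend b0 c"
definition Psi where "Psi c = \<xi> (homologous_rel_set 1 X {} (c - BB (chain_boundary 1 c)))"

lemma Rel_pp: "Rel s (pp s)"
  unfolding pp_def by (rule someI[of "Rel s" s]) (simp add: Rel_def)

lemma b0: "singular_chain 1 X (b0 s) \<and> chain_boundary 1 (b0 s) = frag_of s - frag_of (pp s)"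
proof -
  have "singular_relboundary 0 X {} (frag_of s - frag_of (pp s))"
    using Rel_pp[of s] by (simp add: Rel_def homologous_rel_def)
  then have "\<exists>d. singular_chain 1 X d \<and> chain_boundary 1 d = frag_of s - frag_of (pp s)"
    by (simp add: singular_boundary)
  then show ?thesis unfolding b0_def by (rule someI_ex)
qed

lemma pp_eq: assumes "Rel s t" shows "pp s = pp t"
proof -
  have "Rel s = Rel t"
    using assms unfolding Rel_def fun_eq_iff by (meson homologous_rel_sym homologous_rel_trans)
  then show ?thesis by (simp add: pp_def)
qed

lemma BB_chain: "singular_chain 1 X (BB c)"
  unfolding BB_def by (rule singular_chain_extend) (use b0 in blast)

lemma BB_add: "BB (a + b) = BB a + BB b"
  by (simp add: BB_def frag_extend_add)

lemma BB_diff: "BB (a - b) = BB a - BB b"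
  by (simp add: BB_def frag_extend_diff)

lemma BB_boundary: "chain_boundary 1 (BB c) = c - frag_extend (\<lambda>s. frag_of (pp s)) c"
proof -
  have "Poly_Mapping.keys c \<subseteq> UNIV" by simp
  then show ?thesis
  proof (induction c rule: frag_induction)
    case zero then show ?case by (simp add: BB_def)
  next
    case (one x) then show ?case using b0[of x] by (simp add: BB_def)
  next
    case (diff a b) then show ?case
      by (simp add: BB_diff chain_boundary_diff frag_extend_diff algebra_simps)
  qed
qed

lemma pp_boundary_zero:
  assumes "singular_chain 1 X c"
  shows "frag_extend (\<lambda>s. frag_of (pp s)) (chain_boundary 1 c) = 0"
proof -
  have "Poly_Mapping.keys c \<subseteq> singular_simplex_set 1 X" using assms by (simp add: singular_chain_def)
  then show ?thesis
  proof (induction c rule: frag_induction)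
    case zero then show ?case by simp
  next
    case (one \<sigma>)
    have "singular_relboundary 0 X {} (frag_of (singular_face 1 0 \<sigma>) - frag_of (singular_face 1 1 \<sigma>))"
      unfolding singular_boundary
      by (rule exI[of _ "frag_of \<sigma>"]) (use one in \<open>simp add: singular_chain_of chain_boundary_1_of[simplified]\<close>)
    then have "Rel (singular_face 1 0 \<sigma>) (singular_face 1 1 \<sigma>)" by (simp add: Rel_def homologous_rel_def)
    then have "pp (singular_face 1 0 \<sigma>) = pp (singular_face 1 1 \<sigma>)" by (rule pp_eq)
    then show ?case unfolding chain_boundary_1_of by (simp add: frag_extend_diff)
  next
    case (diff a b) then show ?case
      by (simp add: chain_boundary_diff frag_extend_diff)
  qed
qed

lemma cyc:
  assumes "singular_chain 1 X c"
  shows "singular_relcycle 1 X {} (c - BB (chain_boundary 1 c))"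
  unfolding singular_cycle
proof
  show "singular_chain 1 X (c - BB (chain_boundary 1 c))"
    using assms BB_chain by (simp add: singular_chain_diff)
  show "chain_boundary 1 (c - BB (chain_boundary 1 c)) = 0"
    using pp_boundary_zero[OF assms] unfolding chain_boundary_diff BB_boundary by simp
qed

lemma xi_mult:
  assumes "a \<in> carrier (homology_group 1 X)" "b \<in> carrier (homology_group 1 X)"
  shows "\<xi> (a \<otimes>\<^bsub>homology_group 1 X\<^esub> b) = \<xi> a + \<xi> b"
  using xi_hom assms unfolding hom_def by (simp add: real_add_group_def)

lemma xi_one: "\<xi> (one (homology_group 1 X)) = 0"
proof -
  let ?G = "homology_group 1 X"
  have g: "group ?G" by simp
  have "one ?G \<in> carrier ?G" by (simp add: group.is_monoid[OF g] monoid.one_closed)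
  moreover have "one ?G \<otimes>\<^bsub>?G\<^esub> one ?G = one ?G"
    using monoid.l_one[OF group.is_monoid[OF g]] calculation by blast
  ultimately have "\<xi> (one ?G) = \<xi> (one ?G) + \<xi> (one ?G)"
    using xi_mult by metis
  then show ?thesis by simp
qed

lemma xi_boundary:
  assumes "singular_relboundary 1 X {} c"
  shows "\<xi> (homologous_rel_set 1 X {} c) = 0"
proof -
  have "homologous_rel_set 1 X {} c = singular_relboundary_set 1 X {}"
    using homologous_rel_set_eq_relboundary[of 1 X "{}" c] assms by blast
  then show ?thesis using xi_one unfolding homology1_one by simp
qed

lemma Psi_add:
  assumes "singular_chain 1 X a" "singular_chain 1 X b"
  shows "Psi (a + b) = Psi a + Psi b"
proof -
  have e: "(a + b) - BB (chain_boundary 1 (a + b)) = (a - BB (chain_boundary 1 a)) + (b - BB (chain_boundary 1 b))"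
    by (simp add: chain_boundary_add BB_add algebra_simps)
  show ?thesis unfolding Psi_def e
    using homology1_mult[OF cyc[OF assms(1)] cyc[OF assms(2)]]
      xi_mult[OF homology1_carrier[OF cyc[OF assms(1)]] homology1_carrier[OF cyc[OF assms(2)]]]
    by simp
qed

lemma Psi_diff:
  assumes "singular_chain 1 X a" "singular_chain 1 X b"
  shows "Psi (a - b) = Psi a - Psi b"
  using Psi_add[of "a - b" b] assms by (simp add: singular_chain_diff)

lemma Psi_cycle:
  assumes "singular_chain 1 X z" "chain_boundary 1 z = 0"
  shows "Psi z = \<xi> (homologous_rel_set 1 X {} z)"
  using assms by (simp add: Psi_def BB_def)

lemma Psi_relboundary:
  assumes "singular_relboundary 1 X {} z"
  shows "Psi z = 0"
proof -
  obtain d where d: "singular_chain 2 X d" "chain_boundary 2 d = z"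
    using assms by (auto simp: singular_boundary numeral_2_eq_2)
  have "chain_boundary 1 z = 0"
    using chain_boundary_boundary[OF d(1)] d(2) by simp
  then show ?thesis
    using Psi_cycle singular_boundary_imp_chain[OF assms] xi_boundary[OF assms] by simp
qed

lemma Psi_seg_add:
  assumes "pathin X g" "0 \<le> a" "a \<le> b" "b \<le> c" "c \<le> 1"
  shows "Psi (frag_of (hseg g a c)) = Psi (frag_of (hseg g a b)) + Psi (frag_of (hseg g b c))"
proof -
  have gs: "g ` {a..c} \<subseteq> topspace X" using assms(1) assms(2,5) unfolding pathin_def
    by (auto dest!: continuous_map_image_subset_topspace)
  have s: "singular_chain 1 X (frag_of (hseg g u v))" if "a \<le> u" "u \<le> v" "v \<le> c" for u v
  proof -
    have "singular_simplex 1 (subtopology X (topspace X)) (hseg g u v)"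
      by (rule hseg_simplex) (use assms that gs in auto)
    then show ?thesis by (simp add: singular_chain_of)
  qed
  have t: "singular_chain 2 X (frag_of (htri g a b c))"
  proof -
    have "singular_simplex 2 (subtopology X (topspace X)) (htri g a b c)"
      by (rule htri_simplex) (use assms gs in auto)
    then show ?thesis by (simp add: singular_chain_of)
  qed
  have e: "frag_of (hseg g a c) = (frag_of (hseg g a b) + frag_of (hseg g b c)) - chain_boundary 2 (frag_of (htri g a b c))"
    by (simp add: htri_boundary)
  have rb: "singular_relboundary 1 X {} (chain_boundary 2 (frag_of (htri g a b c)))"
    unfolding singular_boundary using t by (auto simp: numeral_2_eq_2)
  have "Psi (frag_of (hseg g a c)) = Psi (frag_of (hseg g a b) + frag_of (hseg g b c)) - Psi (chain_boundary 2 (frag_of (htri g a b c)))"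
    unfolding e by (rule Psi_diff) (use singular_chain_add[OF s[of a b] s[of b c]] assms singular_boundary_imp_chain[OF rb] in auto)
  also have "\<dots> = Psi (frag_of (hseg g a b)) + Psi (frag_of (hseg g b c))"
    using Psi_relboundary[OF rb] Psi_add[OF s[of a b] s[of b c]] assms by simp
  finally show ?thesis .
qed

lemma Psi_subdiv:
  assumes g: "pathin X g" and t0: "t 0 = 0" and tn: "t n = 1" and mono: "\<forall>i<n. t i \<le> t (Suc i)"
  shows "Psi (frag_of (hseg g 0 1)) = (\<Sum>i<n. Psi (frag_of (hseg g (t i) (t (Suc i)))))"
proof -
  have le: "t i \<le> t j" if "i \<le> j" "j \<le> n" for i j
    using that
  proof (induction j)
    case 0 then show ?case by simp
  next
    case (Suc j)
    show ?case
    proof (cases "i = Suc j")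
      case True then show ?thesis by simp
    next
      case False
      then have "i \<le> j" using Suc.prems by simp
      then have "t i \<le> t j" using Suc.IH Suc.prems by simp
      moreover have "t j \<le> t (Suc j)" using mono Suc.prems by simp
      ultimately show ?thesis by linarith
    qed
  qed
  have t01: "0 \<le> t i" "t i \<le> 1" if "i \<le> n" for i
    using le[of 0 i] le[of i n] that t0 tn by auto
  have "Psi (frag_of (hseg g (t 0) (t m))) = (\<Sum>i<m. Psi (frag_of (hseg g (t i) (t (Suc i)))))" if "m \<le> n" for m
    using that
  proof (induction m)
    case 0
    have "Psi (frag_of (hseg g (t 0) (t 0))) = Psi (frag_of (hseg g (t 0) (t 0))) + Psi (frag_of (hseg g (t 0) (t 0)))"
      by (rule Psi_seg_add) (use g t01[of 0] in auto)
    then show ?case by simp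
  next
    case (Suc m)
    have "Psi (frag_of (hseg g (t 0) (t (Suc m)))) = Psi (frag_of (hseg g (t 0) (t m))) + Psi (frag_of (hseg g (t m) (t (Suc m))))"
    proof (rule Psi_seg_add[OF g])
      show "0 \<le> t 0" "t 0 \<le> t m" "t m \<le> t (Suc m)" "t (Suc m) \<le> 1"
        using t01[of 0] le[of 0 m] mono t01[of "Suc m"] Suc.prems by auto
    qed
    then show ?case using Suc by simp
  qed
  from this[of n] show ?thesis using t0 tn by simp
qed

end



lemma cont_id_sub:
  assumes "V \<subseteq> U"
  shows "continuous_map (subtopology X V) (subtopology X U) id"
  using assms by (auto simp: continuous_map_in_subtopology)

lemma hlc_conn:
  assumes H: "homologically_locally_connected X" and x: "x \<in> topspace X" and U: "nbhd_in X x U"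
  shows "\<exists>V. nbhd_in X x V \<and> V \<subseteq> U \<and> connS X V U"
proof -
  obtain V where V: "nbhd_in X x V" "V \<subseteq> U" and hV: "\<forall>q::int. \<forall>c\<in>carrier (reduced_homology_group q (subtopology X V)).
        hom_induced q (subtopology X V) {} (subtopology X U) {} id c = one (homology_group q (subtopology X U))"
    using H x U unfolding homologically_locally_connected_def by blast
  have Vt: "V \<subseteq> topspace X" using V(1) by (simp add: nbhd_in_def)
  have "connS X V U" unfolding connS_def
  proof (intro ballI)
    fix y z assume y: "y \<in> V" and z: "z \<in> V"
    define c where "c = frag_of (hpt z) - frag_of (hpt y)"
    have sy: "singular_simplex 0 (subtopology X V) (hpt y)" by (rule hpt_simplex) (use y Vt in auto)
    have sz: "singular_simplex 0 (subtopology X V) (hpt z)" by (rule hpt_simplex) (use z Vt in auto)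
    have ch: "singular_chain 0 (subtopology X V) c"
      unfolding c_def by (intro singular_chain_diff) (simp_all add: singular_chain_of sy sz)
    have cyc: "singular_relcycle 0 (subtopology X V) {} c"
      using ch by (simp add: singular_cycle chain_boundary_def)
    have in0: "homologous_rel_set 0 (subtopology X V) {} c \<in> carrier (homology_group 0 (subtopology X V))"
      using carrier_relative_homology_group_0[of "subtopology X V" "{}"] cyc by blast
    have cm: "chain_map 0 (\<lambda>x. ()) c = 0"
      by (simp add: c_def chain_map_diff simplex_map_def hpt_def o_def)
    have "hom_induced (int 0) (subtopology X V) {} (discrete_topology {()}) {} (\<lambda>x. ()) (homologous_rel_set 0 (subtopology X V) {} c)
         = homologous_rel_set 0 (discrete_topology {()}) {} (chain_map 0 (\<lambda>x. ()) c)"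
      by (rule hom_induced_chain_map) (use cyc in auto)
    also have "\<dots> = one (homology_group (int 0) (discrete_topology {()}))"
      unfolding cm one_relative_homology_group
      using homologous_rel_set_eq_relboundary[of 0 "discrete_topology {()}" "{}" 0] by simp
    finally have ker: "hom_induced 0 (subtopology X V) {} (discrete_topology {()}) {} (\<lambda>x. ()) (homologous_rel_set 0 (subtopology X V) {} c)
         = one (homology_group 0 (discrete_topology {()}))" by simp
    have inr: "homologous_rel_set 0 (subtopology X V) {} c \<in> carrier (reduced_homology_group 0 (subtopology X V))"
      unfolding carrier_reduced_homology_group kernel_def using in0 ker by simp
    have "hom_induced (int 0) (subtopology X V) {} (subtopology X U) {} id (homologous_rel_set 0 (subtopology X V) {} c)
         = homologous_rel_set 0 (subtopology X U) {} (chain_map 0 id c)"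
      by (rule hom_induced_chain_map) (use cyc cont_id_sub[OF V(2)] in auto)
    also have "\<dots> = homologous_rel_set 0 (subtopology X U) {} c"
      using chain_map_ident[OF ch] by simp
    finally have "homologous_rel_set 0 (subtopology X U) {} c = one (homology_group (int 0) (subtopology X U))"
      using hV inr by (metis of_nat_0)
    then have "homologous_rel_set 0 (subtopology X U) {} c = singular_relboundary_set 0 (subtopology X U) {}"
      by (simp only: one_relative_homology_group)
    then have "singular_relboundary 0 (subtopology X U) {} c"
      using homologous_rel_set_eq_relboundary by blast
    then show "\<exists>d. singular_chain 1 (subtopology X U) d \<and> chain_boundary 1 d = frag_of (hpt z) - frag_of (hpt y)"
      unfolding singular_boundary c_def by simp
  qed
  then show ?thesis using V by blast
qed

lemma hlc_triv:
  assumes H: "homologically_locally_connected X" and x: "x \<in> topspace X"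
  shows "\<exists>W. nbhd_in X x W \<and> trivS X W"
proof -
  have U: "nbhd_in X x (topspace X)" using x by (auto simp: nbhd_in_def)
  obtain W where W: "nbhd_in X x W" and hW: "\<forall>q::int. \<forall>c\<in>carrier (reduced_homology_group q (subtopology X W)).
        hom_induced q (subtopology X W) {} (subtopology X (topspace X)) {} id c = one (homology_group q (subtopology X (topspace X)))"
    using H x U unfolding homologically_locally_connected_def by blast
  have "trivS X W" unfolding trivS_def
  proof (intro allI impI)
    fix z assume z: "singular_chain 1 (subtopology X W) z \<and> chain_boundary 1 z = 0"
    have cyc: "singular_relcycle 1 (subtopology X W) {} z" using z by (simp add: singular_cycle)
    have in1: "homologous_rel_set 1 (subtopology X W) {} z \<in> carrier (reduced_homology_group 1 (subtopology X W))"
      using homology1_carrier[OF cyc] un_reduced_homology_group[of 1 "subtopology X W"] by simp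
    have "hom_induced (int 1) (subtopology X W) {} X {} id (homologous_rel_set 1 (subtopology X W) {} z)
         = homologous_rel_set 1 X {} (chain_map 1 id z)"
      by (rule hom_induced_chain_map) (use cyc in auto)
    also have "\<dots> = homologous_rel_set 1 X {} z"
      using chain_map_ident[of 1 "subtopology X W" z] z by simp
    finally have "homologous_rel_set 1 X {} z = one (homology_group (int 1) X)"
      using hW in1 by (metis of_nat_1 subtopology_topspace)
    then have "homologous_rel_set 1 X {} z = singular_relboundary_set 1 X {}"
      by (simp only: one_relative_homology_group)
    then show "singular_relboundary 1 X {} z"
      using homologous_rel_set_eq_relboundary by blast
  qed
  then show ?thesis using W by blast
qed

context xi_setup
begin

definition gfun where
  "gfun W x y = Psi (SOME c. singular_chain 1 (subtopology X W) c \<and> chain_boundary 1 c = frag_of (hpt y) - frag_of (hpt x))"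

lemma gfun_step:
  assumes T: "trivS X W" and C: "connS X V W" and xV: "x \<in> V" and yV: "y \<in> V"
    and d: "singular_chain 1 (subtopology X W) d" "chain_boundary 1 d = frag_of (hpt z) - frag_of (hpt y)"
  shows "gfun W x z = gfun W x y + Psi d"
proof -
  define P where "P y c \<longleftrightarrow> singular_chain 1 (subtopology X W) c \<and> chain_boundary 1 c = frag_of (hpt y) - frag_of (hpt x)" for y c
  obtain c0 where "P y c0" using C xV yV unfolding connS_def P_def by blast
  define cy where "cy = (SOME c. P y c)"
  have cy: "P y cy" unfolding cy_def by (rule someI[of "P y" c0]) fact
  have "P z (cy + d)" using cy d unfolding P_def by (simp add: singular_chain_add chain_boundary_add)
  define cz where "cz = (SOME c. P z c)"
  have cz: "P z cz" unfolding cz_def by (rule someI[of "P z" "cy + d"]) fact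
  have gy: "gfun W x y = Psi cy" unfolding gfun_def cy_def P_def by simp
  have gz: "gfun W x z = Psi cz" unfolding gfun_def cz_def P_def by simp
  have w: "singular_chain 1 (subtopology X W) (cy + d - cz) \<and> chain_boundary 1 (cy + d - cz) = 0"
    using cy cz d unfolding P_def by (simp add: singular_chain_add singular_chain_diff chain_boundary_add chain_boundary_diff)
  then have "singular_relboundary 1 X {} (cy + d - cz)" using T unfolding trivS_def by blast
  then have "Psi (cy + d - cz) = 0" by (rule Psi_relboundary)
  moreover have X: "singular_chain 1 X cy" "singular_chain 1 X d" "singular_chain 1 X cz"
    using cy cz d unfolding P_def by (simp_all add: singular_chain_subtopology)
  ultimately have "Psi cy + Psi d - Psi cz = 0"
    using Psi_diff Psi_add singular_chain_add by metis
  then show ?thesis using gy gz by simp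
qed

end



lemma adm_range:
  assumes "admissible_subdivision \<U> g n t Us" "i \<le> n"
  shows "0 \<le> t i" "t i \<le> 1"
proof -
  have t0: "t 0 = 0" and tn: "t n = 1" and mono: "\<forall>i<n. t i \<le> t (Suc i)"
    using assms(1) by (auto simp: admissible_subdivision_def)
  have le: "t i \<le> t j" if "i \<le> j" "j \<le> n" for i j
    using that
  proof (induction j)
    case 0 then show ?case by simp
  next
    case (Suc j)
    show ?case
    proof (cases "i = Suc j")
      case True then show ?thesis by simp
    next
      case False
      then have "i \<le> j" using Suc.prems by simp
      then have "t i \<le> t j" using Suc.IH Suc.prems by simp
      moreover have "t j \<le> t (Suc j)" using mono Suc.prems by simp
      ultimately show ?thesis by linarith
    qed
  qed
  show "0 \<le> t i" using le[of 0 i] assms(2) t0 by simp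
  show "t i \<le> 1" using le[of i n] assms(2) tn by simp
qed

lemma pathin_image: "pathin X g \<Longrightarrow> s \<in> {0..1} \<Longrightarrow> g s \<in> topspace X"
  unfolding pathin_def by (auto dest!: continuous_map_image_subset_topspace)

lemma exists_subdiv:
  assumes g: "pathin X g" and op: "\<forall>V\<in>\<V>. openin X V" and cov: "\<Union>\<V> = topspace X"
  shows "\<exists>n t Us. admissible_subdivision \<V> g n t Us"
proof -
  have "\<forall>V\<in>\<V>. \<exists>T. open T \<and> {s\<in>{0..1}. g s \<in> V} = T \<inter> {0..1}"
  proof
    fix V assume V: "V \<in> \<V>"
    have "openin (top_of_set {0..1}) {s \<in> topspace (top_of_set {0..1::real}). g s \<in> V}"
      using openin_continuous_map_preimage[OF g[unfolded pathin_def]] op V by blast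
    then show "\<exists>T. open T \<and> {s\<in>{0..1}. g s \<in> V} = T \<inter> {0..1}"
      by (simp add: openin_subtopology)
  qed
  from bchoice[OF this] obtain Tf where Tf: "\<forall>V\<in>\<V>. open (Tf V) \<and> {s\<in>{0..1}. g s \<in> V} = Tf V \<inter> {0..1}"
    by blast
  have g0: "g 0 \<in> topspace X" using pathin_image[OF g] by simp
  then have ne: "Tf ` \<V> \<noteq> {}" using cov by auto
  have sub: "{0..1} \<subseteq> \<Union>(Tf ` \<V>)"
  proof
    fix s :: real assume s: "s \<in> {0..1}"
    then have "g s \<in> \<Union>\<V>" using pathin_image[OF g] cov by simp
    then obtain V where V: "V \<in> \<V>" "g s \<in> V" by blast
    then have "s \<in> Tf V" using Tf s by blast
    then show "s \<in> \<Union>(Tf ` \<V>)" using V by blast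
  qed
  obtain \<delta> where \<delta>: "0 < \<delta>" "\<And>T. \<lbrakk>T \<subseteq> {0..1}; diameter T < \<delta>\<rbrakk> \<Longrightarrow> \<exists>B \<in> Tf ` \<V>. T \<subseteq> B"
    by (rule Lebesgue_number_lemma[OF compact_Icc ne sub]) (use Tf in auto)
  obtain N :: nat where N: "N > 1 / \<delta>" using reals_Archimedean2 by blast
  have Npos: "N > 0" using N \<delta>(1) by (metis divide_pos_pos gr0I less_numeral_extra(1) of_nat_0 order.asym)
  have small: "1 / real N < \<delta>" using N \<delta>(1) Npos by (simp add: divide_less_eq mult.commute)
  define t where "t i = real i / real N" for i
  have "\<forall>i\<in>{..<N}. \<exists>V. V \<in> \<V> \<and> g ` {t i..t (Suc i)} \<subseteq> V"
  proof
    fix i assume i: "i \<in> {..<N}"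
    have ti: "t i \<le> t (Suc i)" unfolding t_def by (simp add: divide_right_mono)
    have I01: "{t i..t (Suc i)} \<subseteq> {0..1}"
      using i Npos by (auto simp: t_def field_simps)
    have "diameter {t i..t (Suc i)} = 1 / real N"
      using ti by (simp add: t_def add_divide_distrib)
    then obtain B where "B \<in> Tf ` \<V>" "{t i..t (Suc i)} \<subseteq> B" using \<delta>(2)[OF I01] small by auto
    then obtain V where V: "V \<in> \<V>" "{t i..t (Suc i)} \<subseteq> Tf V" by blast
    have "g ` {t i..t (Suc i)} \<subseteq> V"
    proof
      fix y assume "y \<in> g ` {t i..t (Suc i)}"
      then obtain s where s: "s \<in> {t i..t (Suc i)}" "y = g s" by blast
      then have "s \<in> Tf V \<inter> {0..1}" using V I01 by blast
      then show "y \<in> V" using Tf V s by blast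
    qed
    then show "\<exists>V. V \<in> \<V> \<and> g ` {t i..t (Suc i)} \<subseteq> V" using V by blast
  qed
  from bchoice[OF this] obtain Us where Us: "\<forall>i\<in>{..<N}. Us i \<in> \<V> \<and> g ` {t i..t (Suc i)} \<subseteq> Us i" by blast
  have "admissible_subdivision \<V> g N t Us"
    unfolding admissible_subdivision_def
    using Us Npos by (auto simp: t_def divide_right_mono)
  then show ?thesis by blast
qed



theorem mainTheorem11:
  fixes X :: "'a topology" and \<xi> :: "'a chain set \<Rightarrow> real"
  assumes "paracompact_space X"
    and "Hausdorff_space X"
    and "homologically_locally_connected X"
    and "\<xi> \<in> hom (homology_group 1 X) real_add_group"
  shows "\<exists>\<U> f. closed_1form X \<U> f \<and>
           (\<forall>\<gamma>. pathin X \<gamma> \<and> \<gamma> 0 = \<gamma> 1 \<longrightarrow> form_integral_is \<U> f \<gamma> (\<xi> (loop_class X \<gamma>)))"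
proof -
  interpret xi_setup X \<xi> using assms(4) by unfold_locales
  have "\<forall>x\<in>topspace X. \<exists>W. nbhd_in X x W \<and> trivS X W" using hlc_triv[OF assms(3)] by blast
  from bchoice[OF this] obtain Wf where Wf: "\<forall>x\<in>topspace X. nbhd_in X x (Wf x) \<and> trivS X (Wf x)" by blast
  have "\<forall>x\<in>topspace X. \<exists>V. nbhd_in X x V \<and> V \<subseteq> Wf x \<and> connS X V (Wf x)"
    using hlc_conn[OF assms(3)] Wf by blast
  from bchoice[OF this] obtain Vf where Vf: "\<forall>x\<in>topspace X. nbhd_in X x (Vf x) \<and> Vf x \<subseteq> Wf x \<and> connS X (Vf x) (Wf x)" by blast
  have "\<forall>x\<in>topspace X. \<exists>Q. openin X Q \<and> x \<in> Q \<and> Q \<subseteq> Vf x" using Vf unfolding nbhd_in_def by blast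
  from bchoice[OF this] obtain Of where Of: "\<forall>x\<in>topspace X. openin X (Of x) \<and> x \<in> Of x \<and> Of x \<subseteq> Vf x" by blast
  define \<O> where "\<O> = Of ` topspace X"
  have O1: "\<forall>U\<in>\<O>. openin X U" using Of by (auto simp: \<O>_def)
  have O2: "\<Union>\<O> = topspace X"
  proof -
    have "Of x \<subseteq> topspace X" if "x \<in> topspace X" for x using Of that openin_subset by blast
    then show ?thesis using Of unfolding \<O>_def by blast
  qed
  obtain \<V> where \<V>: "\<forall>V\<in>\<V>. openin X V" "\<Union>\<V> = topspace X" "\<forall>V\<in>\<V>. \<exists>U\<in>\<O>. V \<subseteq> U" "locally_finite_in X \<V>"
    by (rule paracompactD[OF assms(1) O1 O2])
  have "\<forall>K\<in>\<V>. \<exists>x. x \<in> topspace X \<and> K \<subseteq> Of x" using \<V>(3) unfolding \<O>_def by blast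
  from bchoice[OF this] obtain ctr where ctr: "\<forall>K\<in>\<V>. ctr K \<in> topspace X \<and> K \<subseteq> Of (ctr K)" by blast
  define G where "G K y = gfun (Wf (ctr K)) (ctr K) y" for K y
  have Ktop: "K \<subseteq> topspace X" if "K \<in> \<V>" for K using \<V>(1) that openin_subset by blast
  have Gstep: "G K z = G K y + Psi d"
    if K: "K \<in> \<V>" and y: "y \<in> K" and d: "singular_chain 1 (subtopology X K) d" "chain_boundary 1 d = frag_of (hpt z) - frag_of (hpt y)"
    for K y z d
  proof -
    let ?x = "ctr K"
    have x: "?x \<in> topspace X" "K \<subseteq> Of ?x" using ctr K by auto
    have KV: "K \<subseteq> Vf ?x" using x Of by blast
    have KW: "K \<subseteq> Wf ?x" using KV x Vf by blast
    have xV: "?x \<in> Vf ?x" using Vf x(1) unfolding nbhd_in_def by blast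
    show ?thesis unfolding G_def
    proof (rule gfun_step)
      show "trivS X (Wf ?x)" using Wf x(1) by blast
      show "connS X (Vf ?x) (Wf ?x)" using Vf x(1) by blast
      show "?x \<in> Vf ?x" by (fact xV)
      show "y \<in> Vf ?x" using y KV by blast
      show "singular_chain 1 (subtopology X (Wf ?x)) d" using singular_chain_mono[OF d(1) KW] .
      show "chain_boundary 1 d = frag_of (hpt z) - frag_of (hpt y)" by (fact d(2))
    qed
  qed
  have Gloc: "\<exists>N. openin X N \<and> y \<in> N \<and> N \<subseteq> K1 \<inter> K2 \<and> (\<forall>z\<in>N. G K1 z - G K2 z = G K1 y - G K2 y)"
    if K: "K1 \<in> \<V>" "K2 \<in> \<V>" and y: "y \<in> K1 \<inter> K2" for K1 K2 y
  proof -
    have yt: "y \<in> topspace X" using y Ktop K by blast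
    have nb: "nbhd_in X y (K1 \<inter> K2)"
      unfolding nbhd_in_def using y K \<V>(1) Ktop by blast
    obtain V' where V': "nbhd_in X y V'" "V' \<subseteq> K1 \<inter> K2" "connS X V' (K1 \<inter> K2)"
      using hlc_conn[OF assms(3) yt nb] by blast
    obtain N where N: "openin X N" "y \<in> N" "N \<subseteq> V'" using V'(1) unfolding nbhd_in_def by blast
    show ?thesis
    proof (intro exI conjI ballI)
      show "openin X N" "y \<in> N" by fact+
      show "N \<subseteq> K1 \<inter> K2" using N V' by blast
      fix z assume z: "z \<in> N"
      have yV: "y \<in> V'" and zV: "z \<in> V'" using N z by auto
      obtain d where d: "singular_chain 1 (subtopology X (K1 \<inter> K2)) d" "chain_boundary 1 d = frag_of (hpt z) - frag_of (hpt y)"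
        using V'(3) yV zV unfolding connS_def by blast
      have "G K1 z = G K1 y + Psi d"
        by (rule Gstep[OF K(1)]) (use y singular_chain_mono[OF d(1)] d(2) in auto)
      moreover have "G K2 z = G K2 y + Psi d"
        by (rule Gstep[OF K(2)]) (use y singular_chain_mono[OF d(1)] d(2) in auto)
      ultimately show "G K1 z - G K2 z = G K1 y - G K2 y" by simp
    qed
  qed
  obtain \<phi> where \<phi>c: "\<And>V. V\<in>\<V> \<Longrightarrow> continuous_map X euclideanreal (\<phi> V)"
    and \<phi>z: "\<And>V x. V\<in>\<V> \<Longrightarrow> x \<in> topspace X - V \<Longrightarrow> \<exists>N. openin X N \<and> x \<in> N \<and> (\<forall>y\<in>N. \<phi> V y = 0)"
    and \<phi>1: "\<And>x. x \<in> topspace X \<Longrightarrow> (\<Sum>V\<in>{V\<in>\<V>. x\<in>V}. \<phi> V x) = 1"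
    by (rule partition_of_unity[OF assms(1) assms(2) _ \<V>(2) \<V>(4)]) (use \<V>(1) in auto)
  have \<phi>0: "\<phi> K z = 0" if "K \<in> \<V>" "z \<in> topspace X" "z \<notin> K" for K z
    using \<phi>z[of K z] that by blast
  define S where "S y = {K\<in>\<V>. y \<in> K}" for y
  define h where "h U y = (\<Sum>K\<in>S y. \<phi> K y * (G U y - G K y))" for U y
  define F where "F y = (\<Sum>K\<in>S y. \<phi> K y * G K y)" for y
  have hF: "h U y = G U y - F y" if "y \<in> topspace X" for U y
  proof -
    have "h U y = (\<Sum>K\<in>S y. \<phi> K y) * G U y - F y"
      unfolding h_def F_def by (simp add: right_diff_distrib sum_subtractf sum_distrib_right)
    then show ?thesis using \<phi>1[OF that] by (simp add: S_def)
  qed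
  have cont: "continuous_map (subtopology X U) euclideanreal (h U)" if U: "U \<in> \<V>" for U
  proof (rule continuous_map_local_real)
    fix y assume "y \<in> topspace (subtopology X U)"
    then have yt: "y \<in> topspace X" and yU: "y \<in> U" by auto
    obtain N0 where N0: "openin X N0" "y \<in> N0" "finite {K \<in> \<V>. K \<inter> N0 \<noteq> {}}"
      using \<V>(4) yt unfolding locally_finite_in_def by blast
    define F0 where "F0 = {K \<in> \<V>. K \<inter> N0 \<noteq> {}}"
    define Fin where "Fin = {K\<in>F0. y \<in> K}"
    define Fout where "Fout = {K\<in>F0. y \<notin> K}"
    have fin0: "finite F0" using N0(3) by (simp add: F0_def)
    have fin: "finite F0" "finite Fin" "finite Fout"
      using fin0 by (auto simp: Fin_def Fout_def intro: finite_subset[OF _ fin0])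
    have "\<forall>K\<in>Fin. \<exists>N. openin X N \<and> y \<in> N \<and> (\<forall>z\<in>N. G U z - G K z = G U y - G K y)"
    proof
      fix K assume "K \<in> Fin"
      then have K: "K \<in> \<V>" "y \<in> K" by (auto simp: Fin_def F0_def)
      show "\<exists>N. openin X N \<and> y \<in> N \<and> (\<forall>z\<in>N. G U z - G K z = G U y - G K y)"
        using Gloc[OF U K(1)] yU K(2) by blast
    qed
    from bchoice[OF this] obtain Nf where Nf: "\<forall>K\<in>Fin. openin X (Nf K) \<and> y \<in> Nf K \<and> (\<forall>z\<in>Nf K. G U z - G K z = G U y - G K y)"
      by blast
    have "\<forall>K\<in>Fout. \<exists>M. openin X M \<and> y \<in> M \<and> (\<forall>z\<in>M. \<phi> K z = 0)"
    proof
      fix K assume "K \<in> Fout"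
      then have K: "K \<in> \<V>" "y \<notin> K" by (auto simp: Fout_def F0_def)
      show "\<exists>M. openin X M \<and> y \<in> M \<and> (\<forall>z\<in>M. \<phi> K z = 0)"
        using \<phi>z[OF K(1)] yt K(2) by blast
    qed
    from bchoice[OF this] obtain Mf where Mf: "\<forall>K\<in>Fout. openin X (Mf K) \<and> y \<in> Mf K \<and> (\<forall>z\<in>Mf K. \<phi> K z = 0)"
      by blast
    define N where "N = N0 \<inter> \<Inter>(Nf ` Fin \<union> Mf ` Fout)"
    have Nop: "openin X N" unfolding N_def
      by (rule openin_Int_Inter) (use fin N0 Nf Mf in auto)
    have yN: "y \<in> N" unfolding N_def using N0 Nf Mf by auto
    define g where "g z = (\<Sum>K\<in>Fin. \<phi> K z * (G U y - G K y))" for z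
    show "\<exists>N g. openin (subtopology X U) N \<and> y \<in> N \<and> continuous_map (subtopology X U) euclideanreal g \<and> (\<forall>z\<in>N. h U z = g z)"
    proof (intro exI conjI ballI)
      show "openin (subtopology X U) (N \<inter> U)" using Nop by (auto simp: openin_subtopology)
      show "y \<in> N \<inter> U" using yN yU by blast
      show "continuous_map (subtopology X U) euclideanreal g"
        unfolding g_def
        by (intro continuous_map_from_subtopology continuous_map_sum continuous_map_real_mult continuous_map_const[THEN iffD2]) (use fin \<phi>c in \<open>auto simp: Fin_def F0_def\<close>)
      fix z assume z: "z \<in> N \<inter> U"
      have zt: "z \<in> topspace X" using z U Ktop by blast
      have zN0: "z \<in> N0" using z by (simp add: N_def)
      have "h U z = (\<Sum>K\<in>F0. \<phi> K z * (G U z - G K z))"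
        unfolding h_def
      proof (rule sum.mono_neutral_left)
        show "finite F0" by (fact fin(1))
        show "S z \<subseteq> F0" using zN0 by (auto simp: S_def F0_def)
        show "\<forall>i\<in>F0 - S z. \<phi> i z * (G U z - G i z) = 0"
          using \<phi>0 zt by (auto simp: S_def F0_def)
      qed
      also have "\<dots> = g z"
        unfolding g_def
      proof (rule sum.mono_neutral_cong_right)
        show "finite F0" by (fact fin(1))
        show "Fin \<subseteq> F0" by (auto simp: Fin_def)
        show "\<forall>i\<in>F0 - Fin. \<phi> i z * (G U z - G i z) = 0"
        proof
          fix K assume "K \<in> F0 - Fin"
          then have "K \<in> Fout" by (auto simp: Fin_def Fout_def)
          then have "z \<in> Mf K" using z by (auto simp: N_def)
          then have "\<phi> K z = 0" using Mf \<open>K \<in> Fout\<close> by blast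
          then show "\<phi> K z * (G U z - G K z) = 0" by simp
        qed
        fix K assume K: "K \<in> Fin"
        then have "z \<in> Nf K" using z by (auto simp: N_def)
        then have "G U z - G K z = G U y - G K y" using Nf K by blast
        then show "\<phi> K z * (G U z - G K z) = \<phi> K z * (G U y - G K y)" by (simp only:)
      qed
      finally show "h U z = g z" .
    qed
  qed
  have closed: "closed_1form X \<V> h"
    unfolding closed_1form_def
  proof (intro conjI ballI)
    show "openin X U" if "U \<in> \<V>" for U using \<V>(1) that by blast
    show "\<Union>\<V> = topspace X" by (fact \<V>(2))
    show "continuous_map (subtopology X U) euclideanreal (h U)" if "U \<in> \<V>" for U using cont[OF that] .
    fix U V x assume U: "U \<in> \<V>" and V: "V \<in> \<V>" and x: "x \<in> U \<inter> V"
    obtain N where N: "openin X N" "x \<in> N" "N \<subseteq> U \<inter> V" "\<forall>z\<in>N. G U z - G V z = G U x - G V x"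
      using Gloc[OF U V x] by blast
    have xt: "x \<in> topspace X" using x U Ktop by blast
    show "\<exists>W. openin X W \<and> x \<in> W \<and> W \<subseteq> U \<inter> V \<and> (\<forall>y\<in>W. h U y - h V y = h U x - h V x)"
    proof (intro exI conjI ballI)
      show "openin X N" "x \<in> N" "N \<subseteq> U \<inter> V" by (fact N)+
      fix y assume y: "y \<in> N"
      have yt: "y \<in> topspace X" using y N(3) U Ktop by blast
      have e: "G U y - G V y = G U x - G V x" using N(4) y by blast
      show "h U y - h V y = h U x - h V x"
        using e hF[OF yt, of U] hF[OF yt, of V] hF[OF xt, of U] hF[OF xt, of V] by simp
    qed
  qed
  have integ: "form_integral_is \<V> h \<gamma> (\<xi> (loop_class X \<gamma>))" if g: "pathin X \<gamma>" and loop: "\<gamma> 0 = \<gamma> 1" for \<gamma>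
    unfolding form_integral_is_def
  proof (intro conjI allI impI)
    show "\<exists>n t Us. admissible_subdivision \<V> \<gamma> n t Us"
      by (rule exists_subdiv[OF g]) (use \<V> in auto)
    fix n t Us assume adm: "admissible_subdivision \<V> \<gamma> n t Us"
    have t0: "t 0 = 0" and tn: "t n = 1" and mono: "\<forall>i<n. t i \<le> t (Suc i)"
      and UsV: "\<And>i. i < n \<Longrightarrow> Us i \<in> \<V>" and img: "\<And>i. i < n \<Longrightarrow> \<gamma> ` {t i..t (Suc i)} \<subseteq> Us i"
      using adm by (auto simp: admissible_subdivision_def)
    have gt: "\<gamma> (t i) \<in> topspace X" if "i \<le> n" for i
      using pathin_image[OF g] adm_range[OF adm that] by simp
    have step: "h (Us i) (\<gamma> (t (Suc i))) - h (Us i) (\<gamma> (t i))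
        = Psi (frag_of (hseg \<gamma> (t i) (t (Suc i)))) - (F (\<gamma> (t (Suc i))) - F (\<gamma> (t i)))"
      if i: "i < n" for i
    proof -
      have r: "0 \<le> t i" "t i \<le> t (Suc i)" "t (Suc i) \<le> 1"
        using adm_range[OF adm, of i] adm_range[OF adm, of "Suc i"] mono i by auto
      have "G (Us i) (\<gamma> (t (Suc i))) = G (Us i) (\<gamma> (t i)) + Psi (frag_of (hseg \<gamma> (t i) (t (Suc i))))"
      proof (rule Gstep[OF UsV[OF i]])
        show "\<gamma> (t i) \<in> Us i" using img[OF i] r by auto
        show "singular_chain 1 (subtopology X (Us i)) (frag_of (hseg \<gamma> (t i) (t (Suc i))))"
          unfolding singular_chain_of by (rule hseg_simplex[OF g r img[OF i]])
        show "chain_boundary 1 (frag_of (hseg \<gamma> (t i) (t (Suc i)))) = frag_of (hpt (\<gamma> (t (Suc i)))) - frag_of (hpt (\<gamma> (t i)))"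
          by (rule hseg_boundary)
      qed
      then show ?thesis
        using hF[OF gt[of i], of "Us i"] hF[OF gt[of "Suc i"], of "Us i"] i by simp
    qed
    have "subdivision_sum h \<gamma> n t Us = (\<Sum>i<n. Psi (frag_of (hseg \<gamma> (t i) (t (Suc i))))) - (\<Sum>i<n. F (\<gamma> (t (Suc i))) - F (\<gamma> (t i)))"
      unfolding subdivision_sum_def by (simp add: step sum_subtractf)
    also have "(\<Sum>i<n. F (\<gamma> (t (Suc i))) - F (\<gamma> (t i))) = 0"
      using sum_lessThan_telescope[of "\<lambda>i. F (\<gamma> (t i))" n] t0 tn loop by simp
    also have "(\<Sum>i<n. Psi (frag_of (hseg \<gamma> (t i) (t (Suc i))))) = Psi (frag_of (hseg \<gamma> 0 1))"
      using Psi_subdiv[OF g t0 tn mono] by simp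
    also have "hseg \<gamma> 0 1 = path_simplex \<gamma>"
      by (simp add: hseg_def path_simplex_def)
    also have "Psi (frag_of (path_simplex \<gamma>)) = \<xi> (loop_class X \<gamma>)"
    proof -
      have gs: "\<gamma> ` {0..1} \<subseteq> topspace X" using pathin_image[OF g] by blast
      have "singular_simplex 1 (subtopology X (topspace X)) (hseg \<gamma> 0 1)"
        by (rule hseg_simplex[OF g _ _ _ gs]) auto
      then have ch: "singular_chain 1 X (frag_of (path_simplex \<gamma>))"
        by (simp add: singular_chain_of hseg_def path_simplex_def)
      have "chain_boundary 1 (frag_of (hseg \<gamma> 0 1)) = 0"
        unfolding hseg_boundary using loop by simp
      then have bd: "chain_boundary 1 (frag_of (path_simplex \<gamma>)) = 0"
        by (simp add: hseg_def path_simplex_def)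
      show ?thesis using Psi_cycle[OF ch bd] by (simp add: loop_class_def)
    qed
    finally show "subdivision_sum h \<gamma> n t Us = \<xi> (loop_class X \<gamma>)" by simp
  qed
  show ?thesis using closed integ by blast
qed


end
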